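(* Fix $d>0$ and $J_d\ge1$, and assume (1) $t_i^{\max}(d)>0$ for all $i$ and (2) $\sum_{i=1}^Ub_i^{\min}(t_i^{\max}(d))\le B$ (with each $b_i^{\min}(t_i^{\max}(d))$ finite). Let $c_i=p_i^{\max}g_i/N_0$ and let $\boldsymbol b^{(0)}$ be the optimal solution of $$\min_{\boldsymbol b}\ \sum_{i=1}^U\frac{N_id}{b_i\log_2(1+c_i/b_i)}\quad\text{s.t.}\quad\sum_{i=1}^Ub_i\le B,\quad b_i\ge b_i^{\min}\big(t_i^{\max}(d)\big)\ \forall i.$$ Set $p_i^{(0)}=p_i^{\max}$, $t_i^{(0)}=\dfrac{N_id}{b_i^{(0)}\log_2(1+c_i/b_i^{(0)})}$ and $f_i^{(0)}=\dfrac{Z_id+(J_d-1)G_id}{T-J_dt_i^{(0)}}$. Then $J_dt_i^{(0)}<T$ and $(\boldsymbol t^{(0)},\boldsymbol b^{(0)},\boldsymbol p^{(0)},\boldsymbol f^{(0)})$ satisfies, for all $i$, $$\frac{Z_id+(J_d-1)G_id}{f_i}+J_dt_i\le T,\quad t_ib_i\log_2\!\Big(1+\frac{p_ig_i}{N_0b_i}\Big)\ge N_id,\quad\sum_{j}b_j\le B,\quad 0\le p_i\le p_i^{\max},\quad 0<f_i\le f_i^{\max},\quad b_i>0,\quad t_i\ge0.$$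
   Context: $U$ users; $t_i,b_i,p_i,f_i$ are user $i$'s per-round transmission time, bandwidth, transmit power and CPU frequency, with limits $p_i^{\max}>0$, $f_i^{\max}>0$; $g_i>0$ the channel power gain, $N_0>0$ the noise power spectral density, $N_i>0$ the number of classes (payload $N_id$ bits), $B>0$ the total bandwidth, $T>0$ the total time budget; $Z_i=D_iC_i^{(\mathrm{init})}>0$ and $G_i=D_iC_i^{(\mathrm{ret})}\ge0$ the per-dimension CPU cycles of the first round and each retraining round. Define $t_i^{\max}(d)=\big(T-\frac{Z_id+(J_d-1)G_id}{f_i^{\max}}\big)/J_d$ and, for $t>0$, $b_i^{\min}(t)=\inf\{b>0:\ t\,b\log_2(1+\frac{p_i^{\max}g_i}{N_0b})\ge N_id\}$. *)

theory Defs
  imports Complex_Main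
begin

text \<open>Maximal per-round transmission time t_i^max(d) of a user with first-round
  cycles per dimension Z, retraining cycles per dimension G, max CPU frequency fmax,
  total time budget T and J rounds.\<close>
definition tmax :: "real \<Rightarrow> real \<Rightarrow> real \<Rightarrow> nat \<Rightarrow> real \<Rightarrow> real \<Rightarrow> real" where
  "tmax T Z G J fmax d = (T - (Z * d + (real J - 1) * G * d) / fmax) / real J"

definition bmin :: "real \<Rightarrow> real \<Rightarrow> real \<Rightarrow> real \<Rightarrow> real \<Rightarrow> real \<Rightarrow> real" where
  "bmin pmax g N0 N d t = Inf {b. b > 0 \<and> t * b * log 2 (1 + pmax * g / (N0 * b)) \<ge> N * d}"

definition obj :: "nat \<Rightarrow> (nat \<Rightarrow> real) \<Rightarrow> (nat \<Rightarrow> real) \<Rightarrow> real \<Rightarrow> (nat \<Rightarrow> real) \<Rightarrow> real" where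
  "obj U N c d b = (\<Sum>i<U. N i * d / (b i * log 2 (1 + c i / b i)))"

end

theory Submission
  imports Defs "HOL-Real_Asymp.Real_Asymp"
begin

lemma hder:
  assumes c: "(c::real) > 0" and x: "x > 0"
  shows "((\<lambda>x. x*ln(1+c/x)) has_real_derivative (ln(1+c/x) - c/(x+c))) (at x)"
proof -
  have p: "1 + c/x > 0" using c x by (simp add: add_pos_pos)
  have "((\<lambda>x. x*ln(1+c/x)) has_real_derivative (1*ln(1+c/x) + x*((1/(1+c/x)) * (-(c/x^2))))) (at x)"
    using x p by (auto intro!: derivative_eq_intros simp: power2_eq_square)
  moreover have "1*ln(1+c/x) + x*((1/(1+c/x)) * (-(c/x^2))) = ln(1+c/x) - c/(x+c)"
  proof -
    have d: "c*x + x*x > 0" using x c by (simp add: add_pos_pos)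
    have "c = (c * (c * x) + c * (x * x)) / (c * x + x * x)"
      using d by (simp add: field_simps)
    then show ?thesis using x c by (simp add: field_simps power2_eq_square)
  qed
  ultimately show ?thesis by simp
qed

lemma hder_nonneg:
  assumes c: "(c::real) > 0" and x: "x > 0"
  shows "ln(1+c/x) - c/(x+c) \<ge> 0"
proof -
  have p: "1 + c/x > 0" using c x by (simp add: add_pos_pos)
  have "ln (1/(1+c/x)) \<le> 1/(1+c/x) - 1" using p by (intro ln_le_minus_one) simp
  moreover have "ln (1/(1+c/x)) = - ln(1+c/x)" using p by (simp add: ln_div)
  moreover have "1/(1+c/x) - 1 = - (c/(x+c))" using c x by (simp add: field_simps)
  ultimately show ?thesis by linarith
qed

lemma hmono:
  assumes c: "(c::real) > 0" and a: "a > 0" and ab: "a \<le> b"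
  shows "a*ln(1+c/a) \<le> b*ln(1+c/b)"
  using ab
proof (rule DERIV_nonneg_imp_nondecreasing)
  fix x assume "a \<le> x" "x \<le> b"
  then have "x > 0" using a by simp
  then show "\<exists>y. ((\<lambda>x. x*ln(1+c/x)) has_real_derivative y) (at x) \<and> 0 \<le> y"
    using hder[OF c] hder_nonneg[OF c] by blast
qed

lemma hcont:
  assumes c: "(c::real) > 0" and x: "x > 0"
  shows "isCont (\<lambda>x. x*ln(1+c/x)) x"
  using hder[OF c x] by (rule DERIV_isCont)

lemma hlim: "(c::real) > 0 \<Longrightarrow> ((\<lambda>x. x*ln(1+c/x)) \<longlongrightarrow> 0) (at_right 0)"
  by real_asymp

lemma key:
  fixes tm M c b0 :: real
  assumes tm: "tm > 0" and M: "M > 0" and c: "c > 0"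
    and ne: "{b. b > 0 \<and> tm * b * log 2 (1 + c / b) \<ge> M} \<noteq> {}"
    and b0: "b0 \<ge> Inf {b. b > 0 \<and> tm * b * log 2 (1 + c / b) \<ge> M}"
  shows "b0 > 0 \<and> tm * b0 * log 2 (1 + c / b0) \<ge> M"
proof -
  define S where "S = {b. b > 0 \<and> tm * b * log 2 (1 + c / b) \<ge> M}"
  define h where "h = (\<lambda>x::real. x*ln(1+c/x))"
  have Sh: "x \<in> S \<longleftrightarrow> x > 0 \<and> h x \<ge> M * ln 2 / tm" for x
    using tm by (auto simp: S_def h_def log_def field_simps)
  define K where "K = M * ln 2 / tm"
  have K: "K > 0" using tm M by (simp add: K_def)
  have bdd: "bdd_below S" unfolding S_def by (rule bdd_belowI[of _ 0]) auto
  have "eventually (\<lambda>x. h x < K) (at_right 0)"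
    using hlim[OF c] K unfolding h_def by (simp add: order_tendstoD(2))
  then obtain e where e: "e > 0" and he: "\<And>x. 0 < x \<Longrightarrow> x < e \<Longrightarrow> h x < K"
    by (auto simp: eventually_at_right_field)
  have "e \<le> Inf S"
    using ne[folded S_def] 
  proof (intro cInf_greatest)
    fix x assume "x \<in> S"
    then show "e \<le> x" using he Sh K_def by force
  qed
  then have b0pos: "b0 > 0" using b0[folded S_def] e by linarith
  have "h b0 \<ge> K"
  proof (rule ccontr)
    assume "\<not> K \<le> h b0"
    then have lt: "h b0 < K" by simp
    have "eventually (\<lambda>x. h x < K) (at b0)"
      using hcont[OF c b0pos] lt unfolding h_def isCont_def by (simp add: order_tendstoD(2))
    then obtain r where r: "r > 0" and hr: "\<And>x. x \<noteq> b0 \<Longrightarrow> dist x b0 < r \<Longrightarrow> h x < K"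
      by (auto simp: eventually_at)
    have "b0 + r/2 \<le> Inf S"
      using ne[folded S_def]
    proof (intro cInf_greatest)
      fix x assume xS: "x \<in> S"
      show "b0 + r/2 \<le> x"
      proof (rule ccontr)
        assume "\<not> b0 + r / 2 \<le> x"
        then have x1: "x < b0 + r/2" by simp
        have xp: "x > 0" and hx: "h x \<ge> K" using xS Sh K_def by auto
        show False
        proof (cases "x \<le> b0")
          case True
          have "h x \<le> h b0" using hmono[OF c xp True] by (simp add: h_def)
          then show False using hx lt by simp
        next
          case False
          then have "h x < K" using hr[of x] x1 r by (simp add: dist_real_def)
          then show False using hx by simp
        qed
      qed
    qed
    then show False using b0[folded S_def] r by linarith
  qed
  then show ?thesis using b0pos Sh[of b0] unfolding S_def K_def by auto
qed

theorem proposition3: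
  fixes U J :: nat and d B T N0 :: real
    and pmax g N Z G fmax c b0 t0 p0 f0 :: "nat \<Rightarrow> real"
  assumes hB: "B > 0" and hT: "T > 0" and hN0: "N0 > 0"
    and hpar: "\<And>i. i < U \<Longrightarrow> pmax i > 0 \<and> fmax i > 0 \<and> g i > 0 \<and> N i > 0 \<and> Z i > 0 \<and> G i \<ge> 0"
    and hd: "d > 0" and hJ: "J \<ge> 1"
    and h1: "\<And>i. i < U \<Longrightarrow> tmax T (Z i) (G i) J (fmax i) d > 0"
    and hfin: "\<And>i. i < U \<Longrightarrow> {b. b > 0 \<and> tmax T (Z i) (G i) J (fmax i) d * b
                   * log 2 (1 + pmax i * g i / (N0 * b)) \<ge> N i * d} \<noteq> {}"
    and h2: "(\<Sum>i<U. bmin (pmax i) (g i) N0 (N i) d (tmax T (Z i) (G i) J (fmax i) d)) \<le> B"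
    and hc: "\<And>i. c i = pmax i * g i / N0"
    and hb0_feas: "(\<Sum>i<U. b0 i) \<le> B"
      "\<And>i. i < U \<Longrightarrow> b0 i \<ge> bmin (pmax i) (g i) N0 (N i) d (tmax T (Z i) (G i) J (fmax i) d)"
    and hb0_opt: "\<And>b. (\<Sum>i<U. b i) \<le> B \<Longrightarrow>
        (\<forall>i<U. b i \<ge> bmin (pmax i) (g i) N0 (N i) d (tmax T (Z i) (G i) J (fmax i) d)) \<Longrightarrow>
        obj U N c d b0 \<le> obj U N c d b"
    and hp0: "\<And>i. p0 i = pmax i"
    and ht0: "\<And>i. t0 i = N i * d / (b0 i * log 2 (1 + c i / b0 i))"
    and hf0: "\<And>i. f0 i = (Z i * d + (real J - 1) * G i * d) / (T - real J * t0 i)"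
  shows "\<forall>i<U. real J * t0 i < T
     \<and> (Z i * d + (real J - 1) * G i * d) / f0 i + real J * t0 i \<le> T
     \<and> t0 i * b0 i * log 2 (1 + p0 i * g i / (N0 * b0 i)) \<ge> N i * d
     \<and> (\<Sum>j<U. b0 j) \<le> B
     \<and> 0 \<le> p0 i \<and> p0 i \<le> pmax i
     \<and> 0 < f0 i \<and> f0 i \<le> fmax i
     \<and> b0 i > 0 \<and> t0 i \<ge> 0"
proof (intro allI impI)
  fix i assume i: "i < U"
  define tm where "tm = tmax T (Z i) (G i) J (fmax i) d"
  define W where "W = Z i * d + (real J - 1) * G i * d"
  obtain pp: "pmax i > 0" "fmax i > 0" "g i > 0" "N i > 0" "Z i > 0" "G i \<ge> 0"
    using hpar[OF i] by auto
  have ci: "c i > 0" using pp hN0 hc by simp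
  have tm: "tm > 0" using h1[OF i] tm_def by simp
  have M: "N i * d > 0" using pp hd by simp
  have Jr: "real J \<ge> 1" using hJ by simp
  have W: "W > 0" unfolding W_def using pp hd Jr
    by (intro add_pos_nonneg) (auto intro!: mult_nonneg_nonneg)
  have eqc: "\<And>b. pmax i * g i / (N0 * b) = c i / b" using hc by simp
  have "b0 i > 0 \<and> tm * b0 i * log 2 (1 + c i / b0 i) \<ge> N i * d"
    using key[OF tm M ci] hfin[OF i] hb0_feas(2)[OF i]
    unfolding tm_def bmin_def eqc by blast
  then have b0p: "b0 i > 0" and kb: "tm * b0 i * log 2 (1 + c i / b0 i) \<ge> N i * d" by auto
  define L where "L = b0 i * log 2 (1 + c i / b0 i)"
  have Lp: "L > 0" unfolding L_def using b0p ci by (intro mult_pos_pos) (auto simp: add_pos_pos)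
  have t0: "t0 i = N i * d / L" using ht0 L_def by simp
  have t0le: "t0 i \<le> tm" using kb Lp t0 by (simp add: L_def divide_le_eq mult.assoc mult.commute)
  have t0nn: "t0 i \<ge> 0" using t0 M Lp by simp
  have tmeq: "real J * tm = T - W / fmax i" using Jr unfolding tm_def tmax_def W_def by simp
  have Jt: "real J * t0 i \<le> T - W / fmax i"
    using tmeq t0le Jr by (metis mult_left_mono of_nat_0_le_iff)
  have Wf: "W / fmax i > 0" using W pp by simp
  have gap: "T - real J * t0 i > 0" using Jt Wf by linarith
  have f0: "f0 i = W / (T - real J * t0 i)" using hf0 W_def by simp
  have f0p: "f0 i > 0" using f0 gap W by simp
  have "W \<le> fmax i * (T - real J * t0 i)" using Jt pp by (simp add: field_simps)
  then have f0le: "f0 i \<le> fmax i" using f0 gap by (simp add: divide_le_eq mult.commute)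
  have c1: "W / f0 i + real J * t0 i \<le> T" using f0 gap W by simp
  have c2: "t0 i * b0 i * log 2 (1 + p0 i * g i / (N0 * b0 i)) \<ge> N i * d"
  proof -
    have "t0 i * L = N i * d" using t0 Lp by simp
    then show ?thesis using hp0 eqc by (simp add: L_def mult.assoc)
  qed
  show "real J * t0 i < T
     \<and> (Z i * d + (real J - 1) * G i * d) / f0 i + real J * t0 i \<le> T
     \<and> t0 i * b0 i * log 2 (1 + p0 i * g i / (N0 * b0 i)) \<ge> N i * d
     \<and> (\<Sum>j<U. b0 j) \<le> B
     \<and> 0 \<le> p0 i \<and> p0 i \<le> pmax i
     \<and> 0 < f0 i \<and> f0 i \<le> fmax i
     \<and> b0 i > 0 \<and> t0 i \<ge> 0"
    using gap c1 c2 hb0_feas(1) hp0 pp f0p f0le b0p t0nn unfolding W_def by auto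
qed

end
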